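(* Let $q$ be a prime power and let $l$ be an odd prime with $l\nmid q$. Then every monic irreducible factor of $x^{l}-1$ in $\mathbb{F}_{q^2}[x]$ is SCRIM if and only if $\mathrm{ord}_l(q^2)$ is odd and $\mathrm{ord}_l(q)$ is even.
   Context: $\mathbb{F}_{q^2}$ is the finite field with $q^2$ elements. For $\alpha\in\mathbb{F}_{q^2}$ put $\bar\alpha=\alpha^q$, and for $f(x)=\sum_i f_ix^i\in\mathbb{F}_{q^2}[x]$ put $\overline{f(x)}=\sum_i \bar f_i x^i$. For $f(x)$ with $f(0)\neq 0$, its reciprocal is $f^*(x)=x^{\deg f}f(0)^{-1}f(1/x)$ and its conjugate-reciprocal is $f^\dagger(x)=\overline{f^*(x)}$. A polynomial $f(x)\in\mathbb{F}_{q^2}[x]$ is SCRIM (self-conjugate-reciprocal irreducible monic) if it is monic, irreducible, $f(0)\ne 0$, and $f(x)=f^\dagger(x)$. For coprime integers $m,a$, $\mathrm{ord}_m(a)$ is the least positive $s$ with $a^s\equiv 1 \pmod m$. *)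

theory Defs
  imports "HOL-Computational_Algebra.Computational_Algebra" "HOL-Number_Theory.Pocklington"
begin

definition conj_poly :: "nat \<Rightarrow> 'a::field poly \<Rightarrow> 'a poly" where
  "conj_poly q f = map_poly (\<lambda>c. c ^ q) f"

text \<open>Reciprocal f^*(x) = x^(deg f) f(0)^(-1) f(1/x); reflect_poly is x^(deg f) f(1/x).\<close>
definition recip_poly :: "'a::field poly \<Rightarrow> 'a poly" where
  "recip_poly f = Polynomial.smult (inverse (Polynomial.coeff f 0)) (reflect_poly f)"

definition conj_recip_poly :: "nat \<Rightarrow> 'a::field poly \<Rightarrow> 'a poly" where
  "conj_recip_poly q f = conj_poly q (recip_poly f)"

definition SCRIM :: "nat \<Rightarrow> 'a::field poly \<Rightarrow> bool" where
  "SCRIM q f \<longleftrightarrow> lead_coeff f = 1 \<and> irreducible f \<and> Polynomial.coeff f 0 \<noteq> 0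
      \<and> f = conj_recip_poly q f"

definition prime_power :: "nat \<Rightarrow> bool" where
  "prime_power q \<longleftrightarrow> (\<exists>p k. prime p \<and> k \<ge> 1 \<and> q = p ^ k)"

end

theory Submission
  imports Defs
begin

lemma of_nat_card_zero: "of_nat (card (UNIV::'a::{finite,comm_ring_1} set)) = (0::'a)"
proof -
  have "(\<Sum>y\<in>(UNIV::'a set). y) = (\<Sum>y\<in>UNIV. y + 1)"
    by (rule sum.reindex_bij_witness[of _ "\<lambda>y. y + 1" "\<lambda>y. y - 1"]) auto
  also have "\<dots> = (\<Sum>y\<in>UNIV. y) + of_nat (card (UNIV::'a set))"
    by (simp add: sum.distrib)
  finally show ?thesis by simp
qed

lemma fermat_field: "(x::'a::{finite,field}) ^ card (UNIV::'a set) = x"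
proof (cases "x = 0")
  case False
  have "x * (\<Prod>y\<in>UNIV-{0}. x * y) = x * x ^ (card (UNIV :: 'a set) - 1) * \<Prod>(UNIV-{0})"
    by (simp add: prod.distrib mult_ac)
  also have "x * x ^ (card (UNIV :: 'a set) - 1) = x ^ Suc (card (UNIV :: 'a set) - 1)"
    by (subst power_Suc) auto
  also have "Suc (card (UNIV :: 'a set) - 1) = card (UNIV :: 'a set)"
    using finite_UNIV_card_ge_0[where ?'a = 'a] by simp
  also have "(\<Prod>y\<in>UNIV-{0}. x * y) = (\<Prod>y\<in>UNIV-{0}. y)"
    by (rule prod.reindex_bij_witness[of _ "\<lambda>y. y / x" "\<lambda>y. x * y"]) (use False in auto)
  finally show ?thesis
    by simp
qed (use finite_UNIV_card_ge_0[where ?'a = 'a] in auto)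

lemma fermat_field_pow: "(x::'a::{finite,field}) ^ (card (UNIV::'a set)^n) = x"
  by (induction n) (simp_all add: fermat_field power_mult)

lemma CHAR_prime_ff: "prime CHAR('a::{finite,field})"
  by (rule prime_CHAR_semidom) (rule finite_imp_CHAR_pos, simp)

lemma CHAR_dvd_card: "CHAR('a::{finite,field}) dvd card (UNIV::'a set)"
  using of_nat_card_zero[where 'a='a] of_nat_eq_0_iff_char_dvd by blast

lemma frob_add_poly:
  fixes a b :: "'a::{finite,field} poly"
  assumes "m = CHAR('a) ^ s"
  shows "(a + b) ^ m = a ^ m + b ^ m"
  by (rule freshmans_dream') (use assms CHAR_prime_ff in auto)

lemma const_poly_power': "[:c:] ^ n = [:c ^ n:]"
  by (induction n) (auto simp: mult.commute)

lemma frob_pcompose: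
  fixes g h :: "'a::{finite,field} poly"
  assumes "m = CHAR('a) ^ s"
  shows "(pcompose g h) ^ m = pcompose (map_poly (\<lambda>c. c ^ m) g) (h ^ m)"
proof (induction g)
  case 0
  have "m > 0" using assms CHAR_prime_ff[where 'a='a] prime_gt_0_nat by auto
  then show ?case by simp
next
  case (pCons a p)
  have "m > 0" using assms CHAR_prime_ff[where 'a='a] prime_gt_0_nat by auto
  have "(pcompose (pCons a p) h) ^ m = ([:a:] + h * pcompose p h) ^ m"
    by (simp add: pcompose_pCons)
  also have "\<dots> = [:a ^ m:] + h ^ m * pcompose (map_poly (\<lambda>c. c ^ m) p) (h ^ m)"
    by (simp add: frob_add_poly[OF assms] power_mult_distrib const_poly_power' pCons.IH)
  also have "\<dots> = pcompose (map_poly (\<lambda>c. c ^ m) (pCons a p)) (h ^ m)"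
    using \<open>m > 0\<close> by (simp add: map_poly_pCons pcompose_pCons)
  finally show ?case .
qed

lemma frob_pcompose_card:
  fixes g h :: "'a::{finite,field} poly"
  assumes "card (UNIV::'a set) = CHAR('a) ^ s"
  shows "(pcompose g h) ^ (card (UNIV::'a set) ^ n) = pcompose g (h ^ (card (UNIV::'a set) ^ n))"
proof -
  have "card (UNIV::'a set) ^ n = CHAR('a) ^ (s * n)" by (simp add: assms power_mult)
  from frob_pcompose[OF this] have "(pcompose g h) ^ (card (UNIV::'a set) ^ n) = pcompose (map_poly (\<lambda>c. c ^ (card (UNIV::'a set) ^ n)) g) (h ^ (card (UNIV::'a set) ^ n))" .
  also have "map_poly (\<lambda>c. c ^ (card (UNIV::'a set) ^ n)) g = g"
    by (simp add: fermat_field_pow)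
  finally show ?thesis .
qed

lemma cong_pcompose:
  fixes M u v :: "'a::comm_ring_1 poly"
  assumes "M dvd u - v"
  shows "M dvd pcompose p u - pcompose p v"
proof (induction p)
  case 0 then show ?case by simp
next
  case (pCons a p)
  have "pcompose (pCons a p) u - pcompose (pCons a p) v
        = u * (pcompose p u - pcompose p v) + (u - v) * pcompose p v"
    by (simp add: pcompose_pCons algebra_simps)
  then show ?case using pCons.IH assms by simp
qed

lemma pow_cong_dvd:
  fixes y :: "'a::comm_ring_1"
  assumes "[a = b] (mod l)"
  shows "(y ^ l - 1) dvd y ^ a - y ^ b"
proof -
  have key: "(y ^ l - 1) dvd y ^ a - y ^ (a mod l)" for a
  proof -
    have "y ^ a = y ^ (a mod l) * (y ^ l) ^ (a div l)"
      by (metis mod_div_mult_eq power_add power_mult mult.commute)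
    hence "y ^ a - y ^ (a mod l) = y ^ (a mod l) * ((y ^ l) ^ (a div l) - 1)"
      by (simp add: algebra_simps)
    moreover have "(y ^ l - 1) dvd ((y ^ l) ^ (a div l) - 1)"
      using power_diff_1_eq[of "y ^ l" "a div l"] by simp
    ultimately show ?thesis by simp
  qed
  have "a mod l = b mod l" using assms by (simp add: cong_def)
  then have "y ^ a - y ^ b = (y ^ a - y ^ (a mod l)) - (y ^ b - y ^ (b mod l))" by simp
  then show ?thesis by (metis key dvd_diff)
qed

lemma X_pow_monom: "[:0,1::'a::comm_semiring_1:] ^ n = Polynomial.monom 1 n"
  by (simp add: monom_altdef)

lemma pcompose_X: "pcompose [:0,1:] (h::'a::comm_ring_1 poly) = h"
  by (simp add: pcompose_pCons)

lemma pcompose_X_pow: "pcompose ([:0,1:] ^ a) (h::'a::comm_ring_1 poly) = h ^ a"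
  by (induction a) (simp_all add: pcompose_mult pcompose_1 pcompose_pCons)

lemma prime_elem_dvd_prod_ex:
  assumes "prime_elem (p::'b::idom)" "finite A" "p dvd prod f A"
  shows "\<exists>a\<in>A. p dvd f a"
  using assms(2,3)
proof (induction A rule: finite_induct)
  case empty
  then show ?case using assms(1) prime_elem_not_unit by auto
next
  case (insert x F)
  then show ?case using assms(1) prime_elem_dvd_mult_iff by auto
qed

lemma dvd_poly_eval_coeffs:
  fixes D :: "'a::comm_ring_1 poly poly"
  assumes "\<And>k. f dvd Polynomial.coeff D k"
  shows "f dvd poly D w"
  using assms
proof (induction D)
  case 0 then show ?case by simp
next
  case (pCons a p)
  have "f dvd a" using pCons.prems[of 0] by simp
  moreover have "f dvd poly p w" using pCons.IH pCons.prems by (metis coeff_pCons_Suc)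
  ultimately show ?case by simp
qed

lemma map_poly_hom_add:
  assumes "\<And>x y. \<phi> (x + y) = \<phi> x + \<phi> y" "\<phi> 0 = 0"
  shows "map_poly \<phi> (p + q) = map_poly \<phi> p + map_poly \<phi> q"
  by (rule poly_eqI) (simp add: coeff_map_poly assms)

lemma map_poly_hom_mult:
  fixes \<phi> :: "'a::comm_ring_1 \<Rightarrow> 'b::comm_ring_1"
  assumes add: "\<And>x y. \<phi> (x + y) = \<phi> x + \<phi> y" and mult: "\<And>x y. \<phi> (x * y) = \<phi> x * \<phi> y"
    and z: "\<phi> 0 = 0"
  shows "map_poly \<phi> (p * q) = map_poly \<phi> p * map_poly \<phi> q"
proof (induction p)
  case 0 then show ?case by simp
next
  case (pCons a p)
  have "map_poly \<phi> (pCons a p * q) = map_poly \<phi> (Polynomial.smult a q + pCons 0 (p * q))"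
    by simp
  also have "\<dots> = Polynomial.smult (\<phi> a) (map_poly \<phi> q) + pCons 0 (map_poly \<phi> p * map_poly \<phi> q)"
    by (simp add: map_poly_hom_add[OF add z] map_poly_smult z mult map_poly_pCons pCons.IH)
  also have "\<dots> = map_poly \<phi> (pCons a p) * map_poly \<phi> q"
    by (simp add: map_poly_pCons z)
  finally show ?case .
qed

lemma map_poly_hom_prod:
  fixes \<phi> :: "'a::comm_ring_1 \<Rightarrow> 'b::comm_ring_1"
  assumes add: "\<And>x y. \<phi> (x + y) = \<phi> x + \<phi> y" and mult: "\<And>x y. \<phi> (x * y) = \<phi> x * \<phi> y"
    and z: "\<phi> 0 = 0" and o: "\<phi> 1 = 1"
  shows "map_poly \<phi> (prod f A) = prod (\<lambda>i. map_poly \<phi> (f i)) A"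
proof (induction A rule: infinite_finite_induct)
  case (infinite A) then show ?case using o by simp
next
  case empty then show ?case using o by simp
next
  case (insert x F) then show ?case by (simp add: map_poly_hom_mult[OF add mult z])
qed

lemma const_neg_poly: "(h::'a::comm_ring_1 poly) + [:-a:] = h - [:a:]"
proof -
  have "- [:a:] = [:-a:]" by simp
  then show ?thesis by (metis diff_conv_add_uminus)
qed

lemma pcompose_linear: "pcompose [:-a, 1:] (h::'a::comm_ring_1 poly) = h - [:a:]"
proof -
  have "pcompose [:-a, 1:] h = [:-a:] + h" by (simp add: pcompose_pCons)
  then show ?thesis by (simp add: const_neg_poly add.commute)
qed

lemma poly_linear_prod_root:
  "poly (\<Prod>a\<in>(UNIV::'a::{finite,field} set). [:-a, 1:]) z = 0"
proof -
  have "poly (\<Prod>a\<in>(UNIV::'a set). [:-a, 1:]) z = (\<Prod>a\<in>UNIV. poly [:-a, 1:] z)"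
    by (rule poly_prod)
  also have "\<dots> = 0"
    by (rule prod_zero) (auto intro!: bexI[of _ z])
  finally show ?thesis .
qed
lemma prod_linear_card:
  "(\<Prod>a\<in>(UNIV::'a::{finite,field} set). [:-a, 1:]) = [:0,1:] ^ card (UNIV::'a set) - [:0,1:]"
  (is "?P = ?R")
proof -
  let ?n = "card (UNIV::'a set)"
  have n2: "?n \<ge> 2"
  proof -
    have "{0::'a, 1} \<subseteq> UNIV" by simp
    hence "card {0::'a,1} \<le> ?n" by (rule card_mono[OF finite_UNIV])
    thus ?thesis by simp
  qed
  have degP: "degree ?P = ?n"
    by (subst degree_prod_eq_sum_degree) auto
  have lcP: "lead_coeff ?P = 1" by (simp add: lead_coeff_prod)
  have degX: "degree ([:0,1::'a:] ^ ?n) = ?n" by (simp add: degree_power_eq)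
  have degR: "degree ?R \<le> ?n"
    using n2 by (intro degree_diff_le) (auto simp: degX)
  have "Polynomial.coeff ?R ?n = 1"
    using n2 by (simp add: X_pow_monom coeff_pCons split: nat.splits)
  then show ?thesis
  proof (intro poly_eqI_degree_lead_coeff[where A = UNIV and n = ?n])
    show "Polynomial.coeff ?P ?n = Polynomial.coeff ?R ?n" using lcP degP \<open>Polynomial.coeff ?R ?n = 1\<close> by simp
  next
    fix z :: 'a
    have "poly ?P z = 0" by (rule poly_linear_prod_root)
    moreover have "poly ?R z = 0" by (simp add: fermat_field)
    ultimately show "poly ?P z = poly ?R z" by simp
  qed (use degP degR in auto)
qed

lemma lemmaA:
  fixes f h :: "'a::{finite,field} poly"
  assumes "prime_elem f" "f dvd h ^ card (UNIV::'a set) - h"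
  shows "\<exists>a. f dvd h - [:a:]"
proof -
  have "pcompose (\<Prod>a\<in>(UNIV::'a set). [:-a, 1:]) h = h ^ card (UNIV::'a set) - h"
    by (simp add: prod_linear_card pcompose_diff pcompose_X_pow pcompose_X)
  moreover have "pcompose (\<Prod>a\<in>(UNIV::'a set). [:-a, 1:]) h = (\<Prod>a\<in>UNIV. h - [:a:])"
    by (simp add: pcompose_prod pcompose_linear)
  ultimately have "f dvd (\<Prod>a\<in>UNIV. h - [:a:])" using assms(2) by simp
  from prime_elem_dvd_prod_ex[OF assms(1) finite_UNIV this] show ?thesis by auto
qed

lemma prime_elem_degree_pos:
  fixes f :: "'a::field poly"
  assumes "prime_elem f" shows "degree f > 0"
proof -
  have "f \<noteq> 0" using assms by simp
  moreover have "\<not> is_unit f" using assms prime_elem_not_unit by blast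
  ultimately show ?thesis using is_unit_iff_degree[of f] by (metis gr0I)
qed

lemma KL:
  fixes f :: "'a::{finite,field} poly"
  assumes pf: "prime_elem f" and fl: "f dvd [:0,1:]^l - 1"
    and cs: "card (UNIV::'a set) = CHAR('a) ^ s"
    and dpos: "d > 0" and dQ: "[card (UNIV::'a set) ^ d = 1] (mod l)"
    and ft: "f dvd pcompose f ([:0,1:]^t)"
  shows "\<exists>j<d. f dvd [:0,1:]^t - [:0,1:]^(card (UNIV::'a set) ^ j)"
proof -
  define Q where "Q = card (UNIV::'a set)"
  define X :: "'a poly" where "X = [:0,1:]"
  define g :: "nat \<Rightarrow> 'a poly poly" where "g j = [: -(X^(Q^j)), 1 :]" for j
  define U where "U = (\<Prod>j<d. g j)"
  define \<phi> :: "'a poly \<Rightarrow> 'a poly" where "\<phi> c = pcompose c (X^Q)" for c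
  have \<phi>add: "\<phi> (a+b) = \<phi> a + \<phi> b" for a b by (simp add: \<phi>_def pcompose_add)
  have \<phi>mult: "\<phi> (a*b) = \<phi> a * \<phi> b" for a b by (simp add: \<phi>_def pcompose_mult)
  have \<phi>0: "\<phi> 0 = 0" by (simp add: \<phi>_def)
  have \<phi>1: "\<phi> 1 = 1" by (simp add: \<phi>_def pcompose_1)
  have \<phi>pow: "\<phi> c = c ^ Q" for c
    using frob_pcompose_card[OF cs, of c X 1] by (simp add: \<phi>_def Q_def X_def)
  have \<phi>X: "\<phi> (X^a) = X^(a*Q)" for a
    by (simp add: \<phi>_def X_def pcompose_X_pow) (metis power_mult mult.commute)
  have g\<phi>: "map_poly \<phi> (g j) = g (Suc j)" for j
  proof -
    have "\<phi> (-(X^(Q^j))) = -(X^(Q^(Suc j)))"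
      using \<phi>X[of "Q^j"] by (simp add: \<phi>_def pcompose_uminus mult.commute)
    then show ?thesis by (simp add: g_def map_poly_pCons \<phi>0 \<phi>1)
  qed
  have mapU: "map_poly \<phi> U = (\<Prod>j<d. g (Suc j))"
    unfolding U_def by (simp add: map_poly_hom_prod[OF \<phi>add \<phi>mult \<phi>0 \<phi>1] g\<phi>)
  obtain d' where d: "d = Suc d'" using dpos by (cases d) auto
  define W where "W = (\<Prod>j<d'. g (Suc j))"
  have U_eq: "U = g 0 * W" unfolding U_def W_def d by (rule prod.lessThan_Suc_shift)
  have mapU2: "map_poly \<phi> U = W * g d" unfolding mapU W_def d by (simp add: prod.lessThan_Suc)
  have gdiff: "g d - g 0 = [: X - X^(Q^d) :]" by (simp add: g_def)
  have diffU: "map_poly \<phi> U - U = Polynomial.smult (X - X^(Q^d)) W"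
  proof -
    have "map_poly \<phi> U - U = W * g d - g 0 * W" by (simp only: mapU2) (simp only: U_eq)
    also have "\<dots> = (g d - g 0) * W" by (simp add: algebra_simps)
    also have "\<dots> = Polynomial.smult (X - X^(Q^d)) W" by (simp add: gdiff)
    finally show ?thesis .
  qed
  have fX: "f dvd X - X^(Q^d)"
  proof -
    have "[Q^d = 1] (mod l)" using dQ by (simp add: Q_def)
    hence h1: "X^l - 1 dvd X^(Q^d) - X^1" by (rule pow_cong_dvd)
    have "f dvd X^l - 1" using fl by (simp add: X_def)
    from dvd_trans[OF this h1] have "f dvd X^(Q^d) - X" by simp
    thus ?thesis by (metis dvd_minus_iff minus_diff_eq)
  qed
  have step: "f dvd (Polynomial.coeff U k)^Q - Polynomial.coeff U k" for k
  proof -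
    have "(Polynomial.coeff U k)^Q - Polynomial.coeff U k = Polynomial.coeff (map_poly \<phi> U - U) k"
      using coeff_map_poly[of \<phi>, OF \<phi>0, of U k] \<phi>pow[of "Polynomial.coeff U k"] by simp
    also have "\<dots> = (X - X^(Q^d)) * Polynomial.coeff W k" by (simp add: diffU)
    finally show ?thesis using fX by simp
  qed
  have degf: "degree f > 0" by (rule prime_elem_degree_pos[OF pf])
  define \<mu> where "\<mu> = map_poly (\<lambda>c. Polynomial.coeff (c mod f) 0) U"
  have c\<mu>: "f dvd Polynomial.coeff U k - [:Polynomial.coeff \<mu> k:]" for k
  proof -
    obtain a where a: "f dvd Polynomial.coeff U k - [:a:]"
      using lemmaA[OF pf step[of k, unfolded Q_def]] by blast
    have "Polynomial.coeff U k mod f = [:a:] mod f" using a by (simp add: mod_eq_dvd_iff)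
    also have "[:a:] mod f = [:a:]" using degf by (intro mod_poly_less) simp
    finally have "Polynomial.coeff \<mu> k = a" by (simp add: \<mu>_def coeff_map_poly)
    with a show ?thesis by simp
  qed
  define D where "D = U - map_poly (\<lambda>a. [:a:]) \<mu>"
  have cD: "f dvd Polynomial.coeff D k" for k
    using c\<mu>[of k] by (simp add: D_def coeff_map_poly)
  have evalD: "f dvd poly U w - pcompose \<mu> w" for w
  proof -
    have "poly U w - pcompose \<mu> w = poly D w" by (simp add: D_def pcompose_altdef)
    thus ?thesis using dvd_poly_eval_coeffs[OF cD] by simp
  qed
  have polyg: "poly (g j) w = w - X^(Q^j)" for j w by (simp add: g_def)
  have "poly U X = 0"
    unfolding U_def poly_prod by (rule prod_zero) (use dpos in \<open>auto simp: polyg intro!: bexI[of _ 0]\<close>)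
  hence "f dvd pcompose \<mu> X" using evalD[of X] by simp
  hence "f dvd \<mu>" by (simp add: X_def)
  then obtain r where r: "\<mu> = f * r" by (elim dvdE)
  have "f dvd pcompose \<mu> (X^t)" using ft by (simp add: r pcompose_mult X_def)
  hence "f dvd poly U (X^t)" using evalD[of "X^t"] by (metis dvd_add diff_add_cancel)
  hence "f dvd (\<Prod>j<d. X^t - X^(Q^j))" by (simp add: U_def poly_prod polyg)
  from prime_elem_dvd_prod_ex[OF pf finite_lessThan this] show ?thesis
    by (auto simp: X_def Q_def)
qed

lemma nat_cong_to_int: "[a ^ n = 1] (mod l) \<longleftrightarrow> [int a ^ n = 1] (mod int l)"
  by (metis cong_int_iff of_nat_1 of_nat_power)

lemma ord_sq:
  fixes l q :: nat
  assumes cop: "coprime l q" and ev: "even (ord l q)"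
  shows "ord l (q^2) = ord l q div 2"
proof -
  define o1 where "o1 = ord l q"
  have o1: "o1 = 2 * (o1 div 2)" using ev o1_def by simp
  have "[(q^2) ^ (o1 div 2) = 1] (mod l)"
    using ord[of q l] o1 by (simp add: o1_def power_mult[symmetric])
  hence a: "ord l (q^2) dvd o1 div 2" using ord_divides by blast
  have "[q ^ (2 * ord l (q^2)) = 1] (mod l)"
    using ord[of "q^2" l] by (simp add: power_mult)
  hence "o1 dvd 2 * ord l (q^2)" unfolding o1_def using ord_divides by blast
  then obtain k where k: "2 * ord l (q^2) = o1 * k" by (elim dvdE)
  have "2 * ord l (q^2) = 2 * ((o1 div 2) * k)" using k o1 by (metis mult.assoc)
  hence "ord l (q^2) = (o1 div 2) * k" by simp
  hence b: "o1 div 2 dvd ord l (q^2)" by simp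
  show ?thesis using a b dvd_antisym o1_def by blast
qed

lemma half_ord_neg:
  fixes l q :: nat
  assumes pl: "prime l" and cop: "coprime l q" and ev: "even (ord l q)"
  shows "[int q ^ (ord l q div 2) = -1] (mod int l)"
proof -
  define e where "e = ord l q div 2"
  have opos: "ord l q > 0" using cop by simp
  have oe: "ord l q = 2 * e" using ev e_def by simp
  have qpos: "q > 0"
  proof (rule ccontr)
    assume "\<not> 0 < q" hence "q = 0" by simp
    with cop have "l = 1" by simp
    with pl show False by simp
  qed
  have "[q ^ (ord l q) = 1] (mod l)" by (rule ord)
  hence "[int q ^ (ord l q) = 1] (mod int l)" using nat_cong_to_int by blast
  moreover have "int q ^ (ord l q) = int q ^ e * int q ^ e" by (simp add: oe mult_2 power_add)
  ultimately have "[int q ^ e * int q ^ e = 1] (mod int l)" by simp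
  moreover have "prime (int l)" using pl by simp
  moreover have "0 < int q ^ e" using qpos by simp
  ultimately have "[int q ^ e = 1] (mod int l) \<or> [int q ^ e = -1] (mod int l)"
    using cong_square by blast
  moreover have "\<not> [int q ^ e = 1] (mod int l)"
  proof
    assume "[int q ^ e = 1] (mod int l)"
    hence "[q ^ e = 1] (mod l)" using nat_cong_to_int by blast
    hence "ord l q dvd e" using ord_divides by blast
    moreover have "0 < e" "e < ord l q" using opos oe by auto
    ultimately show False by (simp add: nat_dvd_not_less)
  qed
  ultimately show ?thesis by (simp add: e_def)
qed

lemma odd_neg_imp:
  fixes l q e :: nat
  assumes pl: "prime l" and ol: "odd l" and cop: "coprime l q" and oe: "odd e"
    and h: "[int q ^ e = -1] (mod int l)"
  shows "odd (ord l (q^2)) \<and> even (ord l q)"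
proof -
  have l3: "l \<ge> 3" proof -
    have "l \<ge> 2" using prime_ge_2_nat[OF pl] .
    moreover have "l \<noteq> 2" using ol by auto
    ultimately show ?thesis by linarith
  qed
  have "[int q ^ e * int q ^ e = (-1) * (-1)] (mod int l)" using h by (intro cong_mult)
  hence "[int q ^ (2*e) = 1] (mod int l)" by (simp add: power_mult mult.commute power2_eq_square)
  hence "[q ^ (2*e) = 1] (mod l)" using nat_cong_to_int by blast
  hence d2: "ord l q dvd 2 * e" using ord_divides by blast
  have ev: "even (ord l q)"
  proof (rule ccontr)
    assume "odd (ord l q)"
    hence "coprime (ord l q) 2" by simp
    hence "ord l q dvd e" using d2 by (metis coprime_dvd_mult_right_iff)
    hence "[q ^ e = 1] (mod l)" using ord_divides by blast
    hence "[int q ^ e = 1] (mod int l)" using nat_cong_to_int by blast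
    hence "[-1 = (1::int)] (mod int l)" using h by (metis cong_sym cong_trans)
    hence "int l dvd 2" by (simp add: cong_iff_dvd_diff)
    hence "l dvd 2" by presburger
    hence "l \<le> 2" by (simp add: dvd_imp_le)
    thus False using l3 by simp
  qed
  have "ord l (q^2) = ord l q div 2" by (rule ord_sq[OF cop ev])
  moreover have "ord l q div 2 dvd e"
  proof -
    obtain k where k: "2 * e = ord l q * k" using d2 by (elim dvdE)
    define h where "h = ord l q div 2"
    have oh: "ord l q = 2 * h" using ev by (simp add: h_def)
    have "2 * e = 2 * (h * k)" using k oh by simp
    hence "e = h * k" by simp
    thus ?thesis by (simp add: h_def)
  qed
  ultimately have "ord l (q^2) dvd e" by simp
  hence "odd (ord l (q^2))" using oe dvd_trans[of 2 "ord l (q^2)" e] by auto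
  with ev show ?thesis by simp
qed

lemma nt_forward:
  fixes l q j :: nat
  assumes pl: "prime l" and ol: "odd l" and nd: "\<not> l dvd q"
    and h: "[(l - 1) * q = (q^2)^j] (mod l)"
  shows "odd (ord l (q^2)) \<and> even (ord l q)"
proof -
  have cop: "coprime l q" using pl nd by (simp add: prime_imp_coprime)
  have l3: "l \<ge> 3" proof -
    have "l \<ge> 2" using prime_ge_2_nat[OF pl] .
    moreover have "l \<noteq> 2" using ol by auto
    ultimately show ?thesis by linarith
  qed
  have "[int ((l - 1) * q) = int ((q^2)^j)] (mod int l)" using h cong_int_iff by blast
  hence "[int (l - 1) * int q = int q ^ (2*j)] (mod int l)" by (simp add: power_mult)
  moreover have "int (l - 1) = int l - 1" using l3 by simp
  ultimately have h1: "[(int l - 1) * int q = int q ^ (2*j)] (mod int l)" by simp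
  have "[int l - 1 = -1] (mod int l)" by (simp add: cong_iff_dvd_diff)
  hence "[(int l - 1) * int q = -1 * int q] (mod int l)" by (intro cong_mult) auto
  hence h2: "[- int q = int q ^ (2*j)] (mod int l)" using h1 by (metis cong_sym cong_trans mult_minus1)
  have "[q ^ (l - 1) = 1] (mod l)" using fermat_theorem[OF pl nd] .
  hence f1: "[int q ^ (l - 1) = 1] (mod int l)" using nat_cong_to_int by blast
  have "l - 1 = Suc (l - 2)" using l3 by simp
  hence "int q ^ (l - 1) = int q ^ (l - 2) * int q" by (simp only: power_Suc2)
  hence ferm: "[int q ^ (l - 2) * int q = 1] (mod int l)" using f1 by simp
  have "[int q ^ (l - 2) * (- int q) = int q ^ (l - 2) * int q ^ (2*j)] (mod int l)"
    using h2 by (intro cong_mult) auto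
  moreover have "[int q ^ (l - 2) * (- int q) = -1] (mod int l)"
    using ferm by (metis cong_minus_minus_iff mult_minus_right)
  ultimately have "[int q ^ (l - 2) * int q ^ (2*j) = -1] (mod int l)"
    by (rule cong_trans[OF cong_sym])
  moreover have "int q ^ (2*j + (l - 2)) = int q ^ (l - 2) * int q ^ (2*j)" by (simp add: power_add mult.commute)
  ultimately have "[int q ^ (2*j + (l - 2)) = -1] (mod int l)" by simp
  moreover have "odd (2*j + (l - 2))" using ol l3 by simp
  ultimately show ?thesis using odd_neg_imp[OF pl ol cop] by blast
qed

lemma nt_backward:
  fixes l q :: nat
  assumes pl: "prime l" and ol: "odd l" and nd: "\<not> l dvd q"
    and h: "odd (ord l (q^2)) \<and> even (ord l q)"
  shows "\<exists>j. [(l - 1) * q * (q^2)^j = 1] (mod l)"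
proof -
  have cop: "coprime l q" using pl nd by (simp add: prime_imp_coprime)
  have l3: "l \<ge> 1" using prime_gt_0_nat[OF pl] by simp
  define e where "e = ord l q div 2"
  have oe: "odd e" using ord_sq[OF cop] h e_def by simp
  have n1: "[int q ^ e = -1] (mod int l)" using half_ord_neg[OF pl cop] h e_def by simp
  define j where "j = e div 2"
  have ej: "e = Suc (2 * j)" using oe j_def by simp
  have qe: "q * (q^2)^j = q ^ e" by (simp add: ej power_mult[symmetric])
  have eqn: "(l - 1) * q * (q^2)^j = (l - 1) * q ^ e" by (simp add: qe mult.assoc)
  have "[int (l - 1) * int q ^ e = (-1) * (-1)] (mod int l)"
  proof (intro cong_mult n1)
    show "[int (l - 1) = -1] (mod int l)" using l3 by (simp add: of_nat_diff cong_iff_dvd_diff)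
  qed
  hence "[int ((l - 1) * q ^ e) = int 1] (mod int l)" by simp
  hence "[int ((l - 1) * q * (q^2)^j) = int 1] (mod int l)" by (simp only: eqn)
  hence "[(l - 1) * q * (q^2)^j = 1] (mod l)" by (simp only: cong_int_iff)
  thus ?thesis by blast
qed

lemma reflect_as_sum:
  "reflect_poly p = (\<Sum>i\<le>degree p. Polynomial.monom (Polynomial.coeff p i) (degree p - i))"
proof (rule poly_eqI)
  fix j
  let ?n = "degree p"
  have "Polynomial.coeff (\<Sum>i\<le>?n. Polynomial.monom (Polynomial.coeff p i) (?n - i)) j
        = (\<Sum>i\<le>?n. if ?n - i = j then Polynomial.coeff p i else 0)"
    by (simp add: coeff_sum coeff_monom)
  also have "\<dots> = (if j \<le> ?n then Polynomial.coeff p (?n - j) else 0)"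
  proof (cases "j \<le> ?n")
    case True
    have "(\<Sum>i\<le>?n. if ?n - i = j then Polynomial.coeff p i else 0)
          = (\<Sum>i\<le>?n. if i = ?n - j then Polynomial.coeff p i else 0)"
      by (rule sum.cong) (use True in auto)
    also have "\<dots> = Polynomial.coeff p (?n - j)" using True by (simp add: sum.delta)
    finally show ?thesis using True by simp
  next
    case False
    then show ?thesis by (intro trans[OF sum.neutral]) auto
  qed
  also have "\<dots> = Polynomial.coeff (reflect_poly p) j" by (simp add: coeff_reflect_poly)
  finally show "Polynomial.coeff (reflect_poly p) j = Polynomial.coeff (\<Sum>i\<le>?n. Polynomial.monom (Polynomial.coeff p i) (?n - i)) j" by simp
qed

lemma pcompose_monom: "pcompose (Polynomial.monom a k) (h::'a::comm_ring_1 poly) = Polynomial.smult a (h ^ k)"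
  by (simp add: monom_altdef pcompose_smult pcompose_X_pow)

lemma shift_cong:
  fixes c :: "nat \<Rightarrow> 'a::comm_ring_1"
  assumes l1: "l \<ge> 1"
  shows "([:0,1:]^l - 1) dvd [:0,1:]^n * pcompose (\<Sum>i\<le>n. Polynomial.monom (c i) (n - i)) ([:0,1:]^(l-1))
           - (\<Sum>i\<le>n. Polynomial.monom (c i) i)"
proof -
  define X :: "'a poly" where "X = [:0,1:]"
  have t: "X^n * pcompose (Polynomial.monom (c i) (n - i)) (X^(l-1)) - Polynomial.monom (c i) i
        = Polynomial.smult (c i) (X^(n + (l-1)*(n-i)) - X^i)" for i
    by (simp add: monom_altdef pcompose_smult pcompose_X_pow mult_smult_right power_mult[symmetric]
        power_add smult_diff_right X_def)
  have eq: "X^n * pcompose (\<Sum>i\<le>n. Polynomial.monom (c i) (n - i)) (X^(l-1)) - (\<Sum>i\<le>n. Polynomial.monom (c i) i)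
        = (\<Sum>i\<le>n. Polynomial.smult (c i) (X^(n + (l-1)*(n-i)) - X^i))"
  proof -
    have "X^n * pcompose (\<Sum>i\<le>n. Polynomial.monom (c i) (n - i)) (X^(l-1)) - (\<Sum>i\<le>n. Polynomial.monom (c i) i)
        = (\<Sum>i\<le>n. X^n * pcompose (Polynomial.monom (c i) (n - i)) (X^(l-1)) - Polynomial.monom (c i) i)"
      by (simp add: pcompose_sum sum_distrib_left sum_subtractf)
    also have "\<dots> = (\<Sum>i\<le>n. Polynomial.smult (c i) (X^(n + (l-1)*(n-i)) - X^i))"
      by (rule sum.cong[OF refl t])
    finally show ?thesis .
  qed
  have "(X^l - 1) dvd Polynomial.smult (c i) (X^(n + (l-1)*(n-i)) - X^i)" if i_le: "i \<le> n" for i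
  proof -
    have "n + (l-1)*(n-i) = i + l*(n-i)"
    proof -
      obtain k where k: "n = i + k" using le_Suc_ex[OF i_le] by blast
      obtain m where m: "l = Suc m" using l1 by (cases l) auto
      show ?thesis by (simp add: k m)
    qed
    hence "[n + (l-1)*(n-i) = i] (mod l)" by (simp add: cong_def)
    hence "(X^l - 1) dvd X^(n + (l-1)*(n-i)) - X^i" by (rule pow_cong_dvd)
    thus ?thesis by (rule dvd_smult)
  qed
  hence "(X^l - 1) dvd (\<Sum>i\<le>n. Polynomial.smult (c i) (X^(n + (l-1)*(n-i)) - X^i))"
    by (intro dvd_sum) auto
  thus ?thesis using eq by (simp add: X_def)
qed

lemma not_dvd_X_pow:
  fixes f :: "'a::field poly"
  assumes pf: "prime_elem f" and fl: "f dvd [:0,1:]^l - 1" and l1: "l \<ge> 1"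
  shows "\<not> f dvd [:0,1:]^n"
proof
  assume h: "f dvd [:0,1:]^n"
  show False
  proof (cases "n = 0")
    case True then show False using h pf prime_elem_not_unit by auto
  next
    case False
    hence "f dvd [:0,1:]" using h pf prime_elem_dvd_power by blast
    moreover have "[:0,1::'a:] dvd [:0,1:]^l" using l1 by simp
    ultimately have "f dvd [:0,1:]^l" by (rule dvd_trans)
    hence "f dvd [:0,1:]^l - ([:0,1:]^l - 1)" using fl by (rule dvd_diff)
    thus False using pf prime_elem_not_unit by auto
  qed
qed

lemma coeff0_nonzero:
  fixes f :: "'a::field poly"
  assumes fl: "f dvd [:0,1:]^l - 1" and l1: "l \<ge> 1"
  shows "Polynomial.coeff f 0 \<noteq> 0"
proof
  assume "Polynomial.coeff f 0 = 0"
  hence "[:0,1:] dvd f" using dvd_iff_poly_eq_0[of 0 f] by (simp add: poly_0_coeff_0)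
  hence "[:0,1:] dvd [:0,1::'a:]^l - 1" using fl by (rule dvd_trans)
  moreover have "[:0,1::'a:] dvd [:0,1:]^l" using l1 by simp
  ultimately have "[:0,1::'a:] dvd [:0,1:]^l - ([:0,1:]^l - 1)" by (metis dvd_diff)
  hence "is_unit [:0,1::'a:]" by simp
  thus False using is_unit_iff_degree[of "[:0,1::'a:]"] by simp
qed

lemma compB:
  fixes f :: "'a::{finite,field} poly"
  assumes pf: "prime_elem f" and mon: "lead_coeff f = 1" and fl: "f dvd [:0,1:]^l - 1" and l1: "l \<ge> 1"
    and qC: "q = CHAR('a)^k"
  shows "degree (conj_recip_poly q f) = degree f" "lead_coeff (conj_recip_poly q f) = 1"
    "f dvd pcompose (conj_recip_poly q f) ([:0,1:]^((l-1)*q))"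
proof -
  define X :: "'a poly" where "X = [:0,1:]"
  have fl': "f dvd X^l - 1" using fl by (simp add: X_def)
  have c0: "Polynomial.coeff f 0 \<noteq> 0" by (rule coeff0_nonzero[OF fl l1])
  have qpos: "q > 0" using qC CHAR_prime_ff[where 'a='a] prime_gt_0_nat by simp
  define R where "R = recip_poly f"
  have R: "R = Polynomial.smult (inverse (Polynomial.coeff f 0)) (reflect_poly f)" by (simp add: R_def recip_poly_def)
  have degR: "degree R = degree f" using c0 by (simp add: R)
  have lcrefl: "lead_coeff (reflect_poly f) = Polynomial.coeff f 0"
    using c0 by (simp add: coeff_reflect_poly)
  have lcrefl': "Polynomial.coeff (reflect_poly f) (degree f) = Polynomial.coeff f 0"
    using c0 by (simp add: coeff_reflect_poly)
  have lcR: "lead_coeff R = 1" using c0 by (simp add: R lcrefl')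
  have cr: "conj_recip_poly q f = map_poly (\<lambda>c. c ^ q) R" by (simp add: conj_recip_poly_def conj_poly_def R_def)
  show "degree (conj_recip_poly q f) = degree f"
    unfolding cr using degR by (subst degree_map_poly) auto
  show "lead_coeff (conj_recip_poly q f) = 1"
    unfolding cr using lcR qpos by (subst lead_coeff_map_poly_nz) auto
  define n where "n = degree f"
  have "(X^l - 1) dvd X^n * pcompose (reflect_poly f) (X^(l-1)) - f"
    using shift_cong[OF l1, of n "Polynomial.coeff f"]
    by (simp add: X_def n_def reflect_as_sum[of f, folded n_def] poly_as_sum_of_monoms)
  hence "f dvd X^n * pcompose (reflect_poly f) (X^(l-1)) - f" by (rule dvd_trans[OF fl'])
  hence "f dvd X^n * pcompose (reflect_poly f) (X^(l-1))" by (metis dvd_add dvd_refl diff_add_cancel)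
  moreover have "\<not> f dvd X^n" using not_dvd_X_pow[OF pf fl l1] by (simp add: X_def)
  ultimately have "f dvd pcompose (reflect_poly f) (X^(l-1))" using pf prime_elem_dvd_mult_iff by blast
  hence "f dvd pcompose R (X^(l-1))" unfolding R pcompose_smult by (rule dvd_smult)
  hence "f dvd (pcompose R (X^(l-1)))^q" using qpos by (metis dvd_power dvd_trans)
  also have "(pcompose R (X^(l-1)))^q = pcompose (map_poly (\<lambda>c. c ^ q) R) ((X^(l-1))^q)"
    by (rule frob_pcompose[OF qC])
  also have "\<dots> = pcompose (conj_recip_poly q f) ([:0,1:]^((l-1)*q))"
    by (simp add: cr X_def power_mult)
  finally show "f dvd pcompose (conj_recip_poly q f) ([:0,1:]^((l-1)*q))" .
qed

lemma monic_dvd_eq: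
  fixes f g :: "'a::field poly"
  assumes "lead_coeff f = 1" "lead_coeff g = 1" "degree g = degree f" "f dvd g"
  shows "f = g"
proof -
  obtain w where w: "g = f * w" using assms(4) by (elim dvdE)
  have g0: "g \<noteq> 0" using assms(2) by auto
  hence f0: "f \<noteq> 0" and w0: "w \<noteq> 0" using w by auto
  have "degree w = 0" using degree_mult_eq[OF f0 w0] w assms(3) by simp
  moreover have "lead_coeff w = 1" using w assms(1,2) by (simp add: lead_coeff_mult)
  moreover obtain c where "w = [:c:]" using \<open>degree w = 0\<close> by (elim degree_eq_zeroE)
  ultimately have "w = 1" by (simp add: one_pCons)
  thus ?thesis using w by simp
qed

lemma cong_from_dvd:
  fixes f :: "'a::field poly"
  assumes pf: "prime_elem f" and fl: "f dvd [:0,1:]^l - 1" and l1: "l \<ge> 1"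
    and nf: "\<not> f dvd [:0,1:] - 1" and pl: "prime l"
    and h: "f dvd [:0,1:]^a - [:0,1:]^b"
  shows "[a = b] (mod l)"
proof -
  define X :: "'a poly" where "X = [:0,1:]"
  have fl': "f dvd X^l - 1" using fl by (simp add: X_def)
  have main: "[a = b] (mod l)" if ab: "b \<le> a" and h: "f dvd X^a - X^b" for a b
  proof -
    have "X^a - X^b = X^b * (X^(a-b) - 1)" using ab by (simp add: algebra_simps power_add[symmetric])
    hence "f dvd X^b * (X^(a-b) - 1)" using h by simp
    moreover have "\<not> f dvd X^b" using not_dvd_X_pow[OF pf fl l1] by (simp add: X_def)
    ultimately have h1: "f dvd X^(a-b) - 1" using pf prime_elem_dvd_mult_iff by blast
    define r where "r = (a - b) mod l"
    have "[a - b = r] (mod l)" by (simp add: r_def cong_def)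
    hence "(X^l - 1) dvd X^(a-b) - X^r" by (rule pow_cong_dvd)
    hence "f dvd X^(a-b) - X^r" by (rule dvd_trans[OF fl'])
    from dvd_diff[OF h1 this] have fr: "f dvd X^r - 1" by simp
    have "r = 0"
    proof (rule ccontr)
      assume r0: "r \<noteq> 0"
      have "r < l" using l1 by (simp add: r_def)
      hence "coprime r l" using r0 pl by (metis coprime_commute prime_imp_coprime nat_dvd_not_less neq0_conv)
      then obtain s where s: "[r * s = Suc 0] (mod l)" using cong_solve_coprime_nat by blast
      have "(X^r - 1) dvd (X^r)^s - 1" using power_diff_1_eq[of "X^r" s] by simp
      hence "f dvd X^(r*s) - 1" using fr by (metis dvd_trans power_mult)
      moreover have "f dvd X^(r*s) - X"
      proof -
        have "(X^l - 1) dvd X^(r*s) - X^1" using s by (intro pow_cong_dvd) simp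
        from dvd_trans[OF fl' this] show ?thesis by simp
      qed
      ultimately have "f dvd (X^(r*s) - 1) - (X^(r*s) - X)" by (rule dvd_diff)
      hence "f dvd X - 1" by simp
      thus False using nf by (simp add: X_def)
    qed
    hence "l dvd a - b" by (simp add: r_def mod_eq_0_iff_dvd)
    thus ?thesis using ab by (simp add: cong_altdef_nat)
  qed
  show ?thesis
  proof (cases "b \<le> a")
    case True then show ?thesis using main h by (simp add: X_def)
  next
    case False
    have "f dvd X^b - X^a" using h by (simp add: X_def) (metis dvd_minus_iff minus_diff_eq)
    then show ?thesis using main[of a b] False by (metis cong_sym main nat_le_linear)
  qed
qed

lemma exists_irreducible_factor:
  fixes p :: "'a::field poly"
  assumes "degree p > 0"
  shows "\<exists>g. irreducible g \<and> g dvd p"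
  using assms
proof (induction "degree p" arbitrary: p rule: less_induct)
  case less
  show ?case
  proof (cases "irreducible p")
    case True thus ?thesis by (intro exI[of _ p]) simp
  next
    case False
    have p0: "p \<noteq> 0" using less.prems by auto
    have nu: "\<not> is_unit p" using is_unit_iff_degree[OF p0] less.prems by simp
    from False p0 nu obtain a b where ab: "p = a * b" "\<not> is_unit a" "\<not> is_unit b"
      by (auto simp: irreducible_def)
    have a0: "a \<noteq> 0" and b0: "b \<noteq> 0" using ab p0 by auto
    have "degree b > 0" using ab(3) is_unit_iff_degree[OF b0] by simp
    have "degree a > 0" using ab(2) is_unit_iff_degree[OF a0] by simp
    have "degree p = degree a + degree b" using ab(1) degree_mult_eq[OF a0 b0] by simp
    hence "degree a < degree p" using \<open>degree b > 0\<close> by simp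
    from less.hyps[OF this \<open>degree a > 0\<close>] obtain g where "irreducible g" "g dvd a" by blast
    moreover have "a dvd p" using ab(1) by simp
    ultimately show ?thesis by (blast intro: dvd_trans)
  qed
qed

theorem theorem2p2:
  fixes q l :: nat
  assumes "prime_power q"
    and "card (UNIV :: 'a::{field,finite} set) = q ^ 2"
    and "prime l" and "odd l" and "\<not> l dvd q"
  shows "(\<forall>f :: 'a poly. lead_coeff f = 1 \<and> irreducible f \<and> f dvd (Polynomial.monom 1 l - 1)
            \<longrightarrow> SCRIM q f)
         \<longleftrightarrow> odd (ord l (q ^ 2)) \<and> even (ord l q)"
proof -
  define X :: "'a poly" where "X = [:0,1:]"
  have Xl: "Polynomial.monom 1 l - 1 = X^l - 1" by (simp add: X_def X_pow_monom)
  obtain p k where pk: "prime p" "k \<ge> 1" "q = p^k" using assms(1) unfolding prime_power_def by blast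
  have Cp: "CHAR('a) = p"
  proof -
    have "CHAR('a) dvd card (UNIV::'a set)" by (rule CHAR_dvd_card)
    hence "CHAR('a) dvd p^(k*2)" using assms(2) pk by (simp add: power_mult)
    hence "CHAR('a) dvd p" using CHAR_prime_ff prime_dvd_power by blast
    thus ?thesis using primes_dvd_imp_eq CHAR_prime_ff pk(1) by blast
  qed
  have qC: "q = CHAR('a)^k" using pk Cp by simp
  have cardC: "card (UNIV::'a set) = CHAR('a)^(2*k)" using assms(2) qC by (simp add: power_mult mult.commute)
  have l3: "l \<ge> 3"
  proof -
    have "l \<ge> 2" using prime_ge_2_nat[OF assms(3)] .
    moreover have "l \<noteq> 2" using assms(4) by auto
    ultimately show ?thesis by linarith
  qed
  hence l1: "l \<ge> 1" by simp
  have ferm: "[q^(l-1) = 1] (mod l)" by (rule fermat_theorem[OF assms(3,5)])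
  have dQ: "[card (UNIV::'a set) ^ (l-1) = 1] (mod l)"
  proof -
    have "[(q^(l-1))^2 = 1^2] (mod l)" using ferm by (rule cong_pow)
    thus ?thesis using assms(2) by (simp add: power_mult[symmetric] mult.commute)
  qed
  have dpos: "l - 1 > 0" using l3 by simp
  show ?thesis
  proof
    assume H: "\<forall>f :: 'a poly. lead_coeff f = 1 \<and> irreducible f \<and> f dvd (Polynomial.monom 1 l - 1)
            \<longrightarrow> SCRIM q f"
    define \<Phi> where "\<Phi> = (\<Sum>i<l. X^i)"
    have X\<Phi>: "X^l - 1 = (X - 1) * \<Phi>" by (simp add: \<Phi>_def power_diff_1_eq)
    have Xl0: "X^l - 1 \<noteq> 0"
    proof
      assume "X^l - 1 = 0"
      hence "poly (X^l - 1) 0 = 0" by simp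
      thus False using l1 by (simp add: X_def power_0_left)
    qed
    have \<Phi>0: "\<Phi> \<noteq> 0" using Xl0 X\<Phi> by auto
    have X10: "X - 1 \<noteq> 0"
    proof
      assume "X - 1 = 0"
      hence "poly (X - 1) 0 = 0" by simp
      thus False by (simp add: X_def)
    qed
    have \<Phi>nu: "\<not> is_unit \<Phi>"
    proof
      assume "is_unit \<Phi>"
      hence "degree \<Phi> = 0" using is_unit_iff_degree[OF \<Phi>0] by simp
      hence "degree (X^l - 1) = degree (X - 1)" using X\<Phi> degree_mult_eq[OF X10 \<Phi>0] by simp
      also have "degree (X - 1) \<le> 1" by (intro degree_diff_le) (auto simp: X_def)
      finally have "degree (X^l - 1) \<le> 1" .
      moreover have "Polynomial.coeff (X^l - 1) l \<noteq> 0" using l1 by (simp add: X_def X_pow_monom)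
      hence "l \<le> degree (X^l - 1)" by (rule le_degree)
      ultimately show False using l3 by simp
    qed
    have "degree \<Phi> > 0" using \<Phi>nu is_unit_iff_degree[OF \<Phi>0] by simp
    from exists_irreducible_factor[OF this] obtain g where g: "irreducible g" "g dvd \<Phi>" by blast
    have g0: "g \<noteq> 0" using g(1) by auto
    define f where "f = Polynomial.smult (inverse (lead_coeff g)) g"
    have fg: "f = [:inverse (lead_coeff g):] * g" by (simp add: f_def)
    have unitc: "is_unit [:inverse (lead_coeff g):]" using g0 by (simp add: is_unit_iff_degree)
    have irr: "irreducible f" unfolding fg by (simp only: irreducible_mult_unit_left[OF unitc] g(1))
    have pf: "prime_elem f" using irr by (rule field_poly_irreducible_imp_prime)
    have mon: "lead_coeff f = 1" using g0 by (simp add: f_def)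
    have "g = Polynomial.smult (lead_coeff g) f" using g0 by (simp add: f_def)
    hence "f dvd g" by (metis dvd_smult dvd_refl)
    hence f1: "f dvd \<Phi>" using g(2) by (rule dvd_trans)
    have ff: "f dvd X^l - 1" using f1 X\<Phi> by simp
    have ff': "f dvd [:0,1:]^l - 1" using ff by (simp add: X_def)
    have nf: "\<not> f dvd X - 1"
    proof
      assume fX: "f dvd X - 1"
      have "(X - 1) dvd pcompose \<Phi> X - pcompose \<Phi> 1" by (rule cong_pcompose) simp
      moreover have "pcompose \<Phi> X = \<Phi>" by (simp add: X_def)
      moreover have "pcompose \<Phi> 1 = [:of_nat l:]"
        by (simp add: one_pCons pcompose_pCons_0 \<Phi>_def poly_sum X_def)
      ultimately have "(X - 1) dvd \<Phi> - [:of_nat l:]" by simp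
      hence "f dvd \<Phi> - [:of_nat l:]" using fX dvd_trans by blast
      hence "f dvd \<Phi> - (\<Phi> - [:of_nat l:])" using f1 by (metis dvd_diff)
      hence fl: "f dvd [:of_nat l:]" by simp
      have "of_nat l \<noteq> (0::'a)"
      proof
        assume "of_nat l = (0::'a)"
        hence "CHAR('a) dvd l" by (simp add: of_nat_eq_0_iff_char_dvd)
        hence "CHAR('a) = l" using primes_dvd_imp_eq CHAR_prime_ff assms(3) by blast
        hence "l dvd q" using qC pk(2) by (simp add: dvd_power)
        thus False using assms(5) by simp
      qed
      hence "is_unit [:of_nat l::'a:]" by (simp add: is_unit_iff_degree)
      hence "is_unit f" using fl by (rule dvd_unit_imp_unit[rotated])
      thus False using pf prime_elem_not_unit by blast
    qed
    have "SCRIM q f" using H mon irr ff Xl by simp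
    hence feq: "conj_recip_poly q f = f" by (simp add: SCRIM_def)
    have "f dvd pcompose f ([:0,1:]^((l-1)*q))"
      using compB(3)[OF pf mon ff' l1 qC] feq by simp
    from KL[OF pf ff' cardC dpos dQ this] obtain j where
      j: "f dvd [:0,1:]^((l-1)*q) - [:0,1:]^(card (UNIV::'a set) ^ j)" by blast
    have "[(l-1)*q = card (UNIV::'a set) ^ j] (mod l)"
      by (rule cong_from_dvd[OF pf ff' l1 _ assms(3) j]) (use nf in \<open>simp add: X_def\<close>)
    hence "[(l-1)*q = (q^2) ^ j] (mod l)" using assms(2) by simp
    thus "odd (ord l (q ^ 2)) \<and> even (ord l q)" by (rule nt_forward[OF assms(3,4,5)])
  next
    assume C: "odd (ord l (q ^ 2)) \<and> even (ord l q)"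
    obtain j where hj: "[(l - 1) * q * (q^2)^j = 1] (mod l)" using nt_backward[OF assms(3,4,5) C] by blast
    show "\<forall>f :: 'a poly. lead_coeff f = 1 \<and> irreducible f \<and> f dvd (Polynomial.monom 1 l - 1)
            \<longrightarrow> SCRIM q f"
    proof (intro allI impI)
      fix f :: "'a poly"
      assume A: "lead_coeff f = 1 \<and> irreducible f \<and> f dvd (Polynomial.monom 1 l - 1)"
      have mon: "lead_coeff f = 1" and irr: "irreducible f" using A by auto
      have ff': "f dvd [:0,1:]^l - 1" using A by (simp add: X_pow_monom)
      have pf: "prime_elem f" using irr by (rule field_poly_irreducible_imp_prime)
      define g where "g = conj_recip_poly q f"
      define m where "m = (l-1)*q"
      have B3: "f dvd pcompose g (X^m)" using compB(3)[OF pf mon ff' l1 qC] by (simp add: g_def m_def X_def)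
      have "f dvd (pcompose g (X^m)) ^ (card (UNIV::'a set) ^ j)"
      proof -
        have cpos: "card (UNIV::'a set) ^ j > 0" using finite_UNIV_card_ge_0[where 'a='a] by simp
        have "pcompose g (X^m) dvd (pcompose g (X^m)) ^ (card (UNIV::'a set) ^ j)"
          using cpos by (intro dvd_power) simp
        with B3 show ?thesis by (rule dvd_trans)
      qed
      also have "(pcompose g (X^m)) ^ (card (UNIV::'a set) ^ j) = pcompose g ((X^m) ^ (card (UNIV::'a set) ^ j))"
        by (rule frob_pcompose_card[OF cardC])
      also have "(X^m) ^ (card (UNIV::'a set) ^ j) = X^((l - 1) * q * (q^2)^j)"
        by (simp add: power_mult[symmetric] m_def assms(2))
      finally have f1: "f dvd pcompose g (X^((l - 1) * q * (q^2)^j))" .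
      have "(X^l - 1) dvd X^((l - 1) * q * (q^2)^j) - X^1" using hj by (rule pow_cong_dvd)
      hence "(X^l - 1) dvd pcompose g (X^((l - 1) * q * (q^2)^j)) - pcompose g X"
        by (intro cong_pcompose) simp
      hence "(X^l - 1) dvd pcompose g (X^((l - 1) * q * (q^2)^j)) - g" by (simp add: X_def)
      moreover have "f dvd X^l - 1" using ff' by (simp add: X_def)
      ultimately have "f dvd pcompose g (X^((l - 1) * q * (q^2)^j)) - g"
        using dvd_trans by blast
      hence "f dvd pcompose g (X^((l - 1) * q * (q^2)^j)) - (pcompose g (X^((l - 1) * q * (q^2)^j)) - g)"
        using f1 by (metis dvd_diff)
      hence fg: "f dvd g" by simp
      have "f = g"
        by (rule monic_dvd_eq[OF mon _ _ fg]) (use compB(1,2)[OF pf mon ff' l1 qC] in \<open>simp_all add: g_def\<close>)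
      moreover have "Polynomial.coeff f 0 \<noteq> 0" by (rule coeff0_nonzero[OF ff' l1])
      ultimately show "SCRIM q f" using mon irr by (simp add: SCRIM_def g_def)
    qed
  qed
qed

end
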